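(* Let $N\in\mathbb{N}$ and let $f(x)=\sum_{n=1}^N\alpha_nx^n\mathbbm{1}_{\{x<0\}}+\sum_{n=1}^N\beta_nx^n\mathbbm{1}_{\{x\ge0\}}$ for $x\in\mathbb{R}$, where the coefficients $\alpha_1,\dots,\alpha_N,\beta_1,\dots,\beta_N$ are drawn independently from a distribution absolutely continuous with respect to Lebesgue measure. Let $\eta>0$ and consider gradient descent $x_{t+1}=x_t-\eta f'_+(x_t)$. Suppose $f'_+(0)<0$ or $f'_-(0)<0$. Then, with probability $1$, there exist $a=a(\boldsymbol\alpha,\boldsymbol\beta)<0<b=b(\boldsymbol\alpha,\boldsymbol\beta)$ and a finite $\tilde t=\tilde t(\eta,\boldsymbol\alpha,\boldsymbol\beta)>0$ such that, with $\chi=[a,b]$: whenever $x_t\in\chi$, there exists $0<t'\le\tilde t$ with $x_{t+t'}\notin\chi$.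
   Context: Here $f'_+(x)=\lim_{h\to0^+}\frac{f(x+h)-f(x)}{h}$ and $f'_-(x)=\lim_{h\to0^+}\frac{f(x-h)-f(x)}{h}$ denote the one-sided directional derivatives of $f$ at $x$ in the directions $+1$ and $-1$, respectively. *)

theory Defs
  imports "HOL-Probability.Probability"
begin

definition dir_deriv_plus :: "(real \<Rightarrow> real) \<Rightarrow> real \<Rightarrow> real" where
  "dir_deriv_plus f x = Lim (at_right 0) (\<lambda>h. (f (x + h) - f x) / h)"

definition dir_deriv_minus :: "(real \<Rightarrow> real) \<Rightarrow> real \<Rightarrow> real" where
  "dir_deriv_minus f x = Lim (at_right 0) (\<lambda>h. (f (x - h) - f x) / h)"

definition pw_poly :: "nat \<Rightarrow> (nat \<Rightarrow> real) \<Rightarrow> (nat \<Rightarrow> real) \<Rightarrow> real \<Rightarrow> real" where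
  "pw_poly N \<alpha> \<beta> x =
     (if x < 0 then (\<Sum>n=1..N. \<alpha> n * x ^ n) else (\<Sum>n=1..N. \<beta> n * x ^ n))"

definition gd_step :: "real \<Rightarrow> (real \<Rightarrow> real) \<Rightarrow> real \<Rightarrow> real" where
  "gd_step \<eta> f x = x - \<eta> * dir_deriv_plus f x"

end

theory Submission
  imports Defs
begin

lemma distr_snd_prob:
  assumes "prob_space M1" "prob_space M2"
  shows "distr (M1 \<Otimes>\<^sub>M M2) M2 snd = M2"
proof (intro measure_eqI)
  interpret P: pair_prob_space M1 M2 using assms by (simp add: pair_prob_space_def pair_sigma_finite_def prob_space_imp_sigma_finite)
  fix A assume A: "A \<in> sets (distr (M1 \<Otimes>\<^sub>M M2) M2 snd)"
  from A have "emeasure (distr (M1 \<Otimes>\<^sub>M M2) M2 snd) A = emeasure (M1 \<Otimes>\<^sub>M M2) (space M1 \<times> A)"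
    by (auto simp add: emeasure_distr space_pair_measure dest: sets.sets_into_space intro!: arg_cong2[where f=emeasure])
  with A show "emeasure (distr (M1 \<Otimes>\<^sub>M M2) M2 snd) A = emeasure M2 A"
    using P.M2.emeasure_pair_measure_Times[of "space M1" M1 A] by (simp add: P.M1.emeasure_space_1)
qed simp

lemma AE_coord:
  assumes D: "prob_space D" "sets D = sets borel" "absolutely_continuous lborel D" and N: "1 \<le> (N::nat)"
  shows "AE ab in ((\<Pi>\<^sub>M n\<in>{1..N}. D) \<Otimes>\<^sub>M (\<Pi>\<^sub>M n\<in>{1..N}. D)). fst ab 1 \<noteq> 0 \<and> snd ab 1 \<noteq> (0::real)"
proof -
  let ?P = "\<Pi>\<^sub>M n\<in>{1..N}. D"
  have "{0::real} \<in> null_sets lborel" using countable_imp_null_set_lborel[of "{0::real}"] by simp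
  hence "{0::real} \<in> null_sets D" using D(3) unfolding absolutely_continuous_def by auto
  hence "AE x in D. x \<notin> {0::real}" by (rule AE_not_in)
  hence ae0: "AE x in D. x \<noteq> (0::real)" by simp
  have pP: "prob_space ?P" using D(1) by (intro prob_space_PiM) auto
  have aeP: "AE \<omega> in ?P. \<omega> 1 \<noteq> 0"
    using D(1) N ae0 AE_PiM_component[of "{1..N}" "\<lambda>_. D" 1] by auto
  have m1: "fst \<in> measurable (?P \<Otimes>\<^sub>M ?P) ?P" by simp
  have m2: "snd \<in> measurable (?P \<Otimes>\<^sub>M ?P) ?P" by simp
  have "AE ab in distr (?P \<Otimes>\<^sub>M ?P) ?P fst. ab 1 \<noteq> 0"
    unfolding prob_space.distr_pair_fst[OF pP, of ?P] by (rule aeP)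
  hence a1: "AE ab in (?P \<Otimes>\<^sub>M ?P). fst ab 1 \<noteq> 0" by (rule AE_distrD[OF m1])
  have "AE ab in distr (?P \<Otimes>\<^sub>M ?P) ?P snd. ab 1 \<noteq> 0"
    unfolding distr_snd_prob[OF pP pP] by (rule aeP)
  hence a2: "AE ab in (?P \<Otimes>\<^sub>M ?P). snd ab 1 \<noteq> 0" by (rule AE_distrD[OF m2])
  show ?thesis using a1 a2 by eventually_elim auto
qed

lemma escape:
  fixes T :: "real \<Rightarrow> real"
  assumes c: "c > 0" and S: "S \<subseteq> {a..b}" and step: "\<forall>x\<in>S. d * (T x - x) \<ge> c"
    and inv: "\<forall>x\<in>S. T x \<in> {a..b} \<longrightarrow> T x \<in> S" and d: "\<bar>d\<bar> = 1" and x: "x \<in> S"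
  shows "\<exists>k. 0 < k \<and> k \<le> nat \<lceil>(b-a)/c\<rceil> + 1 \<and> (T^^k) x \<notin> {a..b}"
proof (rule ccontr)
  assume H: "\<not> ?thesis"
  let ?n = "nat \<lceil>(b-a)/c\<rceil> + 1"
  have "k \<le> ?n \<Longrightarrow> (T^^k) x \<in> S \<and> d * ((T^^k) x - x) \<ge> real k * c" for k
  proof (induction k)
    case 0 then show ?case using x by simp
  next
    case (Suc k)
    let ?y = "(T^^k) x"
    have IH: "?y \<in> S" "d * (?y - x) \<ge> real k * c" using Suc by auto
    have "T ?y \<in> {a..b}" using H Suc.prems by auto
    hence "T ?y \<in> S" using inv IH by auto
    moreover have "d * (T ?y - x) = d * (T ?y - ?y) + d * (?y - x)" by (simp add: algebra_simps)
    moreover have "d * (T ?y - ?y) \<ge> c" using step IH by auto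
    ultimately show ?case using IH by (simp add: algebra_simps)
  qed
  from this[of ?n] have y: "(T^^?n) x \<in> S" "d * ((T^^?n) x - x) \<ge> real ?n * c" by auto
  have "(T^^?n) x \<in> {a..b}" "x \<in> {a..b}" using y(1) x S by auto
  hence "\<bar>d * ((T^^?n) x - x)\<bar> \<le> b - a" using d by (auto simp: abs_mult abs_le_iff)
  moreover have "real ?n > (b-a)/c" by linarith
  hence "real ?n * c > b - a" using c by (simp add: field_simps)
  ultimately show False using y(2) by linarith
qed


lemma escape_dyn:
  fixes T gA gB :: "real \<Rightarrow> real"
  assumes ab: "a < 0" "0 < b" and eta: "\<eta> > 0" and A: "A \<noteq> 0" and B: "B \<noteq> 0"
    and hyp: "B < 0 \<or> A > 0"
    and T: "\<And>x. T x = x - \<eta> * (if x < 0 then gA x else gB x)"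
    and bA: "\<And>x. x \<in> {a..<0} \<Longrightarrow> \<bar>gA x - A\<bar> < \<bar>A\<bar>/2"
    and bB: "\<And>x. x \<in> {0..b} \<Longrightarrow> \<bar>gB x - B\<bar> < \<bar>B\<bar>/2"
    and y: "y \<in> {a..b}"
  shows "\<exists>k. 0 < k \<and> k \<le> nat \<lceil>(b-a)/(\<eta> * min \<bar>A\<bar> \<bar>B\<bar> / 2)\<rceil> + 1 \<and> (T^^k) y \<notin> {a..b}"
proof -
  define c where "c = \<eta> * min \<bar>A\<bar> \<bar>B\<bar> / 2"
  have c: "c > 0" using eta A B by (simp add: c_def)
  have cA: "c \<le> \<eta> * (\<bar>A\<bar>/2)" using eta unfolding c_def by (simp add: mult_left_mono)
  have cB: "c \<le> \<eta> * (\<bar>B\<bar>/2)" using eta unfolding c_def by (simp add: mult_left_mono)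
  have L: "sA * (T x - x) \<ge> c" if "x \<in> {a..<0}" "sA = (if A < 0 then 1 else -1)" for x sA
  proof -
    have "sA * (T x - x) = \<eta> * (- sA * gA x)" using T that by simp
    moreover have "- sA * gA x \<ge> \<bar>A\<bar>/2" using bA[OF that(1)] that(2) by (auto simp: abs_if split: if_splits)
    ultimately have "sA * (T x - x) \<ge> \<eta> * (\<bar>A\<bar>/2)" using eta mult_left_mono[of "\<bar>A\<bar>/2" "- sA * gA x" \<eta>] by linarith
    thus ?thesis using cA by linarith
  qed
  have R: "sB * (T x - x) \<ge> c" if "x \<in> {0..b}" "sB = (if B < 0 then 1 else -1)" for x sB
  proof -
    have "sB * (T x - x) = \<eta> * (- sB * gB x)" using T that by simp
    moreover have "- sB * gB x \<ge> \<bar>B\<bar>/2" using bB[OF that(1)] that(2) by (auto simp: abs_if split: if_splits)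
    ultimately have "sB * (T x - x) \<ge> \<eta> * (\<bar>B\<bar>/2)" using eta mult_left_mono[of "\<bar>B\<bar>/2" "- sB * gB x" \<eta>] by linarith
    thus ?thesis using cB by linarith
  qed
  have "\<exists>k. 0 < k \<and> k \<le> nat \<lceil>(b-a)/c\<rceil> + 1 \<and> (T^^k) y \<notin> {a..b}"
  proof (cases "B < 0")
    case True
    show ?thesis
    proof (cases "A < 0")
      case True2: True
      have "\<forall>x\<in>{a..b}. 1 * (T x - x) \<ge> c"
      proof
        fix x assume x: "x \<in> {a..b}"
        show "1 * (T x - x) \<ge> c"
        proof (cases "x < 0")
          case True then show ?thesis using L[of x 1] x True2 by auto
        next
          case False then show ?thesis using R[of x 1] x \<open>B < 0\<close> by auto
        qed
      qed
      then show ?thesis using escape[OF c, of "{a..b}" a b 1 T y] y by auto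
    next
      case False
      hence Ap: "A > 0" using A by auto
      show ?thesis
      proof (cases "y < 0")
        case True
        have st: "\<forall>x\<in>{a..<0}. (-1) * (T x - x) \<ge> c" using L Ap by auto
        have "\<forall>x\<in>{a..<0}. T x \<in> {a..b} \<longrightarrow> T x \<in> {a..<0}"
        proof (intro ballI impI)
          fix x assume x: "x \<in> {a..<0}" "T x \<in> {a..b}"
          have "c \<le> x - T x" using st x(1) by auto
          then show "T x \<in> {a..<0}" using x c by auto
        qed
        then show ?thesis using escape[OF c, of "{a..<0}" a b "-1" T y] st y True ab by (auto simp: subset_iff)
      next
        case False
        have st: "\<forall>x\<in>{0..b}. 1 * (T x - x) \<ge> c" using R \<open>B < 0\<close> by auto
        have "\<forall>x\<in>{0..b}. T x \<in> {a..b} \<longrightarrow> T x \<in> {0..b}"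
        proof (intro ballI impI)
          fix x assume x: "x \<in> {0..b}" "T x \<in> {a..b}"
          have "c \<le> T x - x" using st x(1) by auto
          then show "T x \<in> {0..b}" using x c by auto
        qed
        then show ?thesis using escape[OF c, of "{0..b}" a b "1" T y] st y False ab by (auto simp: subset_iff)
      qed
    qed
  next
    case False
    hence Bp: "B > 0" using B by auto
    hence Ap: "A > 0" using hyp by auto
    have "\<forall>x\<in>{a..b}. (-1) * (T x - x) \<ge> c"
    proof
      fix x assume x: "x \<in> {a..b}"
      show "(-1) * (T x - x) \<ge> c"
      proof (cases "x < 0")
        case True then show ?thesis using L[of x "-1"] x Ap by auto
      next
        case False then show ?thesis using R[of x "-1"] x Bp by auto
      qed
    qed
    then show ?thesis using escape[OF c, of "{a..b}" a b "-1" T y] y by auto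
  qed
  then show ?thesis unfolding c_def .
qed


definition pp :: "nat \<Rightarrow> (nat \<Rightarrow> real) \<Rightarrow> real \<Rightarrow> real" where
  "pp N c x = (\<Sum>n=1..N. c n * x ^ n)"
definition dp :: "nat \<Rightarrow> (nat \<Rightarrow> real) \<Rightarrow> real \<Rightarrow> real" where
  "dp N c x = (\<Sum>n=1..N. c n * (real n * x ^ (n - 1)))"

lemma pp_deriv: "(pp N c has_real_derivative dp N c x) (at x)"
  unfolding pp_def dp_def by (auto intro!: derivative_eq_intros sum.cong simp: ac_simps)

lemma dp_cont: "isCont (dp N c) x"
  unfolding dp_def by (auto intro!: continuous_intros)

lemma pp_0: "pp N c 0 = 0"
  unfolding pp_def by (auto intro!: sum.neutral)

lemma dp_0: "dp N c 0 = (if 1 \<le> N then c 1 else 0)"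
proof -
  have "dp N c 0 = (\<Sum>n\<in>{1..N}. if n = 1 then c 1 else 0)"
    unfolding dp_def by (intro sum.cong) auto
  thus ?thesis by simp
qed

lemma right_lim:
  assumes "(g has_real_derivative d) (at x)"
    and "eventually (\<lambda>h. f (x+h) - f x = g (x+h) - g x) (at_right 0)"
  shows "Lim (at_right 0) (\<lambda>h. (f (x+h) - f x)/h) = d"
proof -
  have "((\<lambda>h. (g (x+h) - g x)/h) \<longlongrightarrow> d) (at 0)" using assms(1) by (simp add: DERIV_def)
  hence "((\<lambda>h. (g (x+h) - g x)/h) \<longlongrightarrow> d) (at_right 0)" by (rule tendsto_mono[OF at_le, rotated]) simp
  hence "((\<lambda>h. (f (x+h) - f x)/h) \<longlongrightarrow> d) (at_right 0)"
    by (rule tendsto_cong[THEN iffD1, rotated]) (use assms(2) in \<open>auto elim: eventually_mono\<close>)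
  thus ?thesis by (rule tendsto_Lim[rotated]) simp
qed

lemma pw_eq: "pw_poly N \<alpha> \<beta> x = (if x < 0 then pp N \<alpha> x else pp N \<beta> x)"
  unfolding pw_poly_def pp_def by simp

lemma ddp: "dir_deriv_plus (pw_poly N \<alpha> \<beta>) x = (if x < 0 then dp N \<alpha> x else dp N \<beta> x)"
proof (cases "x < 0")
  case True
  have "eventually (\<lambda>h. h \<in> {0<..<-x}) (at_right 0)" using True by (intro eventually_at_right_real) simp
  hence "eventually (\<lambda>h. pw_poly N \<alpha> \<beta> (x+h) - pw_poly N \<alpha> \<beta> x = pp N \<alpha> (x+h) - pp N \<alpha> x) (at_right 0)"
    by eventually_elim (use True in \<open>auto simp: pw_eq\<close>)
  then show ?thesis unfolding dir_deriv_plus_def using True right_lim[OF pp_deriv] by simp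
next
  case False
  have "eventually (\<lambda>h. h > 0) (at_right (0::real))" by (simp add: eventually_at_right_less)
  hence "eventually (\<lambda>h. pw_poly N \<alpha> \<beta> (x+h) - pw_poly N \<alpha> \<beta> x = pp N \<beta> (x+h) - pp N \<beta> x) (at_right 0)"
    by eventually_elim (use False in \<open>auto simp: pw_eq\<close>)
  then show ?thesis unfolding dir_deriv_plus_def using False right_lim[OF pp_deriv] by simp
qed

lemma ddm0: "dir_deriv_minus (pw_poly N \<alpha> \<beta>) 0 = - dp N \<alpha> 0"
proof -
  have d: "((\<lambda>h. pp N \<alpha> (-h)) has_real_derivative - dp N \<alpha> 0) (at 0)"
    unfolding pp_def dp_def by (auto intro!: derivative_eq_intros simp: sum_negf[symmetric] intro!: sum.cong)
  have "eventually (\<lambda>h. h > 0) (at_right (0::real))" by (simp add: eventually_at_right_less)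
  hence "eventually (\<lambda>h. pw_poly N \<alpha> \<beta> (-(0+h)) - pw_poly N \<alpha> \<beta> (-0) = pp N \<alpha> (-(0+h)) - pp N \<alpha> (-0)) (at_right 0)"
    by eventually_elim (auto simp: pw_eq pp_0)
  from right_lim[OF d this] show ?thesis unfolding dir_deriv_minus_def by simp
qed


lemma main:
  assumes Q: "(\<alpha> 1 \<noteq> 0 \<and> \<beta> 1 \<noteq> 0) \<or> N = 0"
    and H: "dir_deriv_plus (pw_poly N \<alpha> \<beta>) 0 < 0 \<or> dir_deriv_minus (pw_poly N \<alpha> \<beta>) 0 < 0"
  shows "\<exists>a b. a < 0 \<and> 0 < b \<and>
              (\<forall>\<eta>>0. \<exists>tt::nat. 0 < tt \<and>
                 (\<forall>x0 t. ((gd_step \<eta> (pw_poly N \<alpha> \<beta>)) ^^ t) x0 \<in> {a..b} \<longrightarrow>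
                    (\<exists>t'. 0 < t' \<and> t' \<le> tt \<and>
                       ((gd_step \<eta> (pw_poly N \<alpha> \<beta>)) ^^ (t + t')) x0 \<notin> {a..b})))"
proof -
  define A where "A = dp N \<alpha> 0"
  define B where "B = dp N \<beta> 0"
  have hyp: "B < 0 \<or> A > 0" using H unfolding A_def B_def ddp ddm0 by auto
  have N1: "1 \<le> N"
  proof (rule ccontr)
    assume "\<not> 1 \<le> N"
    hence "A = 0" "B = 0" unfolding A_def B_def dp_0 by auto
    thus False using hyp by auto
  qed
  hence A: "A \<noteq> 0" and B: "B \<noteq> 0" using Q unfolding A_def B_def dp_0 by auto
  obtain sA where sA: "sA > 0" "\<forall>x. x \<noteq> 0 \<and> norm (x - 0) < sA \<longrightarrow> norm (dp N \<alpha> x - A) < \<bar>A\<bar>/2"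
    using LIM_D[OF dp_cont[where N=N and c=\<alpha> and x=0, unfolded continuous_at], of "\<bar>A\<bar>/2"] A unfolding A_def by auto
  obtain sB where sB: "sB > 0" "\<forall>x. x \<noteq> 0 \<and> norm (x - 0) < sB \<longrightarrow> norm (dp N \<beta> x - B) < \<bar>B\<bar>/2"
    using LIM_D[OF dp_cont[where N=N and c=\<beta> and x=0, unfolded continuous_at], of "\<bar>B\<bar>/2"] B unfolding B_def by auto
  define b where "b = min sA sB / 2"
  define a where "a = - b"
  have ab: "a < 0" "0 < b" using sA sB unfolding a_def b_def by auto
  have bA: "\<bar>dp N \<alpha> x - A\<bar> < \<bar>A\<bar>/2" if "x \<in> {a..<0}" for x
  proof -
    have "x \<noteq> 0 \<and> norm (x - 0) < sA" using that sA sB unfolding a_def b_def by auto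
    thus ?thesis using sA(2) by auto
  qed
  have bB: "\<bar>dp N \<beta> x - B\<bar> < \<bar>B\<bar>/2" if "x \<in> {0..b}" for x
  proof (cases "x = 0")
    case True then show ?thesis using B unfolding B_def by simp
  next
    case False
    have "x \<noteq> 0 \<and> norm (x - 0) < sB" using that sA sB False unfolding a_def b_def by auto
    thus ?thesis using sB(2) by auto
  qed
  show ?thesis
  proof (rule exI[of _ a], rule exI[of _ b], intro conjI allI impI)
    show "a < 0" by (fact ab(1))
  next
    show "0 < b" by (fact ab(2))
  next
    fix \<eta> :: real assume eta: "\<eta> > 0"
    let ?T = "gd_step \<eta> (pw_poly N \<alpha> \<beta>)"
    let ?tt = "nat \<lceil>(b-a)/(\<eta> * min \<bar>A\<bar> \<bar>B\<bar> / 2)\<rceil> + 1"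
    have T: "\<And>x. ?T x = x - \<eta> * (if x < 0 then dp N \<alpha> x else dp N \<beta> x)"
      unfolding gd_step_def ddp by simp
    show "\<exists>tt::nat. 0 < tt \<and>
                 (\<forall>x0 t. (?T ^^ t) x0 \<in> {a..b} \<longrightarrow>
                    (\<exists>t'. 0 < t' \<and> t' \<le> tt \<and> (?T ^^ (t + t')) x0 \<notin> {a..b}))"
    proof (rule exI[of _ ?tt], intro conjI allI impI)
      show "0 < ?tt" by simp
    next
      fix x0 t assume y: "(?T ^^ t) x0 \<in> {a..b}"
      obtain k where k: "0 < k" "k \<le> ?tt" "(?T^^k) ((?T ^^ t) x0) \<notin> {a..b}"
        using escape_dyn[OF ab eta A B hyp T bA bB y] by blast
      have "(?T ^^ (t + k)) x0 = (?T^^k) ((?T ^^ t) x0)"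
        by (simp add: funpow_add add.commute[of t k])
      thus "\<exists>t'. 0 < t' \<and> t' \<le> ?tt \<and> (?T ^^ (t + t')) x0 \<notin> {a..b}"
        using k by metis
    qed
  qed
qed

theorem proposition2:
  fixes N :: nat and D :: "real measure"
  assumes "prob_space D"
    and "sets D = sets borel"
    and "absolutely_continuous lborel D"
  shows "AE ab in ((\<Pi>\<^sub>M n\<in>{1..N}. D) \<Otimes>\<^sub>M (\<Pi>\<^sub>M n\<in>{1..N}. D)).
           (dir_deriv_plus (pw_poly N (fst ab) (snd ab)) 0 < 0
              \<or> dir_deriv_minus (pw_poly N (fst ab) (snd ab)) 0 < 0) \<longrightarrow>
           (\<exists>a b. a < 0 \<and> 0 < b \<and>
              (\<forall>\<eta>>0. \<exists>tt::nat. 0 < tt \<and>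
                 (\<forall>x0 t. ((gd_step \<eta> (pw_poly N (fst ab) (snd ab))) ^^ t) x0 \<in> {a..b} \<longrightarrow>
                    (\<exists>t'. 0 < t' \<and> t' \<le> tt \<and>
                       ((gd_step \<eta> (pw_poly N (fst ab) (snd ab))) ^^ (t + t')) x0 \<notin> {a..b}))))"
proof -
  let ?M = "(\<Pi>\<^sub>M n\<in>{1..N}. D) \<Otimes>\<^sub>M (\<Pi>\<^sub>M n\<in>{1..N}. D)"
  have ae: "AE ab in ?M. (fst ab 1 \<noteq> 0 \<and> snd ab 1 \<noteq> (0::real)) \<or> N = 0"
  proof (cases "N = 0")
    case True then show ?thesis by simp
  next
    case False
    hence "1 \<le> N" by simp
    from AE_coord[OF assms this] show ?thesis by (rule AE_mp) simp
  qed
  show ?thesis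
    using ae by (rule AE_mp) (intro AE_I2 impI main, auto)
qed

end
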